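(* Let $M$ be an algebraic group and let $\rho\colon M\to M$ be an invertible mapping (or birational correspondence) defined on a Zariski open subset of $M$ such that \[ \sigma(x):=(\rho(y))^{-1}\rho\bigl(\rho(x)(\rho(xy))^{-1}\bigr) \] is independent of $y$ on a Zariski open subset of $M\times M$. Then for any $a\in M$ the mapping $\tilde\rho(x)=\rho(x)a$ also has this property, and $\rho$ and $\tilde\rho$ define one and the same set-theoretical solution of the pentagon equation, i.e. the maps $s(x,y)=(xy,\ \rho(x)(\rho(xy))^{-1})$ and $\tilde s(x,y)=(xy,\ \tilde\rho(x)(\tilde\rho(xy))^{-1})$ coincide.
   Context: A set-theoretical solution of the pentagon equation on a set $M$ is an invertible map $s\colon M\times M\to M\times M$ with $s_{23}\circ s_{13}\circ s_{12}=s_{12}\circ s_{23}$ as maps of $M\times M\times M$, where $s_{ij}$ acts as $s$ on the $i$-th and $j$-th factors and trivially on the remaining one (in the algebraic setting, maps are defined and identities hold on Zariski open subsets). For $\rho$ with the property stated, the operations $x\cdot y=xy$, $x*y=\rho(x)(\rho(xy))^{-1}$ define the solution $s(x,y)=(x\cdot y,x*y)$. *)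

theory Defs
  imports "HOL-Algebra.Group"
begin

definition pent_star :: "('a, 'b) monoid_scheme \<Rightarrow> ('a \<Rightarrow> 'a) \<Rightarrow> 'a \<Rightarrow> 'a \<Rightarrow> 'a" where
  "pent_star G \<rho> x y = \<rho> x \<otimes>\<^bsub>G\<^esub> inv\<^bsub>G\<^esub> (\<rho> (x \<otimes>\<^bsub>G\<^esub> y))"

definition pent_sol :: "('a, 'b) monoid_scheme \<Rightarrow> ('a \<Rightarrow> 'a) \<Rightarrow> 'a \<times> 'a \<Rightarrow> 'a \<times> 'a" where
  "pent_sol G \<rho> p = (fst p \<otimes>\<^bsub>G\<^esub> snd p, pent_star G \<rho> (fst p) (snd p))"

definition pent_sigma :: "('a, 'b) monoid_scheme \<Rightarrow> ('a \<Rightarrow> 'a) \<Rightarrow> 'a \<Rightarrow> 'a \<Rightarrow> 'a" where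
  "pent_sigma G \<rho> x y = inv\<^bsub>G\<^esub> (\<rho> y) \<otimes>\<^bsub>G\<^esub> \<rho> (pent_star G \<rho> x y)"

text \<open>rho (with domain D) has the property on the set W of pairs: every expression
  in the formula for sigma is defined for (x,y) in W, and sigma(x,y) does not depend on y there.\<close>
definition pent_property ::
  "('a, 'b) monoid_scheme \<Rightarrow> ('a \<Rightarrow> 'a) \<Rightarrow> 'a set \<Rightarrow> ('a \<times> 'a) set \<Rightarrow> bool" where
  "pent_property G \<rho> D W \<longleftrightarrow>
     W \<subseteq> carrier G \<times> carrier G \<and>
     (\<forall>(x,y)\<in>W. x \<in> D \<and> y \<in> D \<and> x \<otimes>\<^bsub>G\<^esub> y \<in> D \<and> pent_star G \<rho> x y \<in> D) \<and>
     (\<exists>\<sigma>. \<forall>(x,y)\<in>W. pent_sigma G \<rho> x y = \<sigma> x)"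

end

theory Submission
  imports Defs
begin

theorem mainTheorem1:
  fixes G (structure) and \<rho> :: "'a \<Rightarrow> 'a" and D E :: "'a set"
    and W :: "('a \<times> 'a) set" and a :: 'a
  assumes "group G"
    and "D \<subseteq> carrier G" and "E \<subseteq> carrier G"
    and "bij_betw \<rho> D E"
    and "pent_property G \<rho> D W"
    and "a \<in> carrier G"
  shows "bij_betw (\<lambda>x. \<rho> x \<otimes> a) D ((\<lambda>z. z \<otimes> a) ` E)
    \<and> pent_property G (\<lambda>x. \<rho> x \<otimes> a) D W
    \<and> (\<forall>x\<in>carrier G. \<forall>y\<in>carrier G. x \<in> D \<longrightarrow> x \<otimes> y \<in> D \<longrightarrow>
          pent_sol G (\<lambda>x. \<rho> x \<otimes> a) (x, y) = pent_sol G \<rho> (x, y))"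
proof -
  interpret group G by fact
  have rc: "\<rho> x \<in> carrier G" if "x \<in> D" for x
    using assms(3,4) that bij_betwE by blast
  have star: "pent_star G (\<lambda>x. \<rho> x \<otimes> a) x y = pent_star G \<rho> x y"
    if "x \<in> D" "x \<otimes> y \<in> D" for x y
  proof -
    have "\<rho> x \<otimes> a \<otimes> inv (\<rho> (x \<otimes> y) \<otimes> a) = \<rho> x \<otimes> (a \<otimes> inv a) \<otimes> inv (\<rho> (x \<otimes> y))"
      using rc that assms(6) by (simp add: inv_mult_group m_assoc r_inv flip: m_assoc[of a "inv a"])
    also have "\<dots> = \<rho> x \<otimes> inv (\<rho> (x \<otimes> y))" using rc that assms(6) by simp
    finally show ?thesis unfolding pent_star_def using rc that assms(6) by simp
  qed
  have b1: "bij_betw (\<lambda>x. \<rho> x \<otimes> a) D ((\<lambda>z. z \<otimes> a) ` E)"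
  proof -
    have "inj_on (\<lambda>z. z \<otimes> a) E"
      using assms(3,6) by (auto intro!: inj_onI simp: subset_iff)
    hence "bij_betw (\<lambda>z. z \<otimes> a) E ((\<lambda>z. z \<otimes> a) ` E)" by (simp add: bij_betw_def)
    from bij_betw_trans[OF assms(4) this] show ?thesis by (simp add: comp_def)
  qed
  from assms(5) obtain \<sigma> where P: "W \<subseteq> carrier G \<times> carrier G"
    "\<forall>(x,y)\<in>W. x \<in> D \<and> y \<in> D \<and> x \<otimes> y \<in> D \<and> pent_star G \<rho> x y \<in> D"
    and S: "\<forall>(x,y)\<in>W. pent_sigma G \<rho> x y = \<sigma> x"
    unfolding pent_property_def by blast
  have "\<forall>(x,y)\<in>W. pent_sigma G (\<lambda>x. \<rho> x \<otimes> a) x y = inv a \<otimes> \<sigma> x \<otimes> a"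
  proof (clarify)
    fix x y assume xy: "(x,y) \<in> W"
    with P have d: "x \<in> D" "y \<in> D" "x \<otimes> y \<in> D" "pent_star G \<rho> x y \<in> D" by auto
    from S xy have s: "inv (\<rho> y) \<otimes> \<rho> (pent_star G \<rho> x y) = \<sigma> x"
      unfolding pent_sigma_def by auto
    have "pent_sigma G (\<lambda>x. \<rho> x \<otimes> a) x y
        = inv (\<rho> y \<otimes> a) \<otimes> (\<rho> (pent_star G \<rho> x y) \<otimes> a)"
      unfolding pent_sigma_def using star d by simp
    also have "\<dots> = inv a \<otimes> (inv (\<rho> y) \<otimes> \<rho> (pent_star G \<rho> x y)) \<otimes> a"
      using rc d assms(6) by (simp add: inv_mult_group m_assoc)
    finally show "pent_sigma G (\<lambda>x. \<rho> x \<otimes> a) x y = inv a \<otimes> \<sigma> x \<otimes> a" using s by simp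
  qed
  hence b2: "pent_property G (\<lambda>x. \<rho> x \<otimes> a) D W"
    unfolding pent_property_def using P star by fastforce
  show ?thesis using b1 b2 star unfolding pent_sol_def by simp
qed

end
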